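(* Assume $c_i=c>0$, $\gamma_i=\gamma>0$, $\nu_i=\nu>0$, $\rho_i=\rho\in(-1,1)$ for all $i$. Then the unique maximiser $(z^{Q,\star},z^{S,\star})$ of $f$ is symmetric: there are reals $z^\star_{s,n},z^\star_{d,n}$ and (for $n\ge2$) $z^\star_{o,n}$ with $z^{S,i,\star}=z^\star_{s,n}$, $z^{Q,i,i,\star}=z^\star_{d,n}$, $z^{Q,i,j,\star}=z^\star_{o,n}$ for $j\ne i$, and $\Delta_n(\gamma_{\rm P})>0$ and $$z^\star_{s,n}=-\frac{\rho\gamma}{Ac\sigma\nu\sqrt n\,\Delta_n(\gamma_{\rm P})}\Big(1-\frac{\gamma_{\rm P}}{n\widetilde\kappa_n}\Big),$$ $$z^\star_{o,n}=\frac1\nu\big(\alpha_nK_n^\star-\beta_nz^\star_{s,n}\big)\ (n\ge2),\qquad z^\star_{d,n}=\frac{1}{\nu A}\Big(\frac{\gamma_{\rm P}}{n}K_n^\star-\gamma\beta_nz^\star_{s,n}+\frac{1}{c\nu}\Big),$$ where $K_n^\star=\frac1{\kappa_n}\Big(\frac{\gamma\nu}{A}-\beta_n\delta z^\star_{s,n}\Big)$.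
   Context: Fix an integer $n\ge1$ and parameters $\sigma>0$, $\gamma_{\rm P}>0$, and for each $i\in\{1,\dots,n\}$: $c_i>0$, $\gamma_i>0$, $\nu_i>0$, $\rho_i\in(-1,1)$. Write $\nu=(\nu_1,\dots,\nu_n)^\top$, $\rho=(\rho_1,\dots,\rho_n)^\top$. The variables are a matrix $z^Q=(z^{Q,i,j})_{i,j}\in\mathbb{R}^{n\times n}$ ($i$ row, $j$ column) and a vector $z^S=(z^{S,1},\dots,z^{S,n})^\top\in\mathbb{R}^n$. Define $f:\mathbb{R}^{n\times n}\times\mathbb{R}^n\to\mathbb{R}$ by $$f(z^Q,z^S)=-\frac1n\sum_{i=1}^n\Big(\frac{(z^{Q,i,i})^2}{2c_i}+\frac{\gamma_i}{2}\sum_{j=1}^n\nu_j^2(z^{Q,i,j})^2+\frac{\gamma_i\sigma^2}{2}(z^{S,i})^2+\frac{\gamma_i\sigma}{\sqrt n}z^{S,i}\sum_{j=1}^n\rho_j\nu_jz^{Q,i,j}-\frac{z^{Q,i,i}}{c_i}\Big)-\frac{\gamma_{\rm P}}{2n^2}\sum_{i=1}^n\Big(\Big(\nu_i-\nu_i\sum_{j=1}^nz^{Q,j,i}-\frac{\rho_i\sigma}{\sqrt n}\sum_{j=1}^nz^{S,j}\Big)^2+\frac{(1-\rho_i^2)\sigma^2}{n}\Big(\sum_{j=1}^nz^{S,j}\Big)^2\Big).$$ $f$ has a unique global maximiser $(z^{Q,\star},z^{S,\star})$. In the homogeneous case define $A=\gamma+\frac{1}{c\nu^2}$, $\delta=1-\frac{\gamma}{A}=\frac{1}{Ac\nu^2}$,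 $\alpha_n=\frac{\gamma_{\rm P}}{n\gamma}$, $\beta_n=\frac{\sigma\rho}{\sqrt n}$, $\widetilde\kappa_n=A+\frac{\gamma_{\rm P}}{n}\Big(\frac{(n-1)A}{\gamma}+1\Big)$, $\kappa_n=\widetilde\kappa_n/A$, and $$\Delta_n(\gamma_{\rm P})=(\gamma+\gamma_{\rm P})(1-\rho^2)+\frac{\gamma\rho^2\delta}{n}+\frac{\gamma_{\rm P}\rho^2\delta^2}{n^2\kappa_n}.$$ *)

theory Defs
  imports Complex_Main
begin

text \<open>Matrices/vectors indexed by 0..<n (row index first). Entries outside the range are
irrelevant to the objective.\<close>

definition objf ::
  "nat \<Rightarrow> real \<Rightarrow> real \<Rightarrow> (nat \<Rightarrow> real) \<Rightarrow> (nat \<Rightarrow> real) \<Rightarrow> (nat \<Rightarrow> real)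
   \<Rightarrow> (nat \<Rightarrow> real) \<Rightarrow> (nat \<Rightarrow> nat \<Rightarrow> real) \<Rightarrow> (nat \<Rightarrow> real) \<Rightarrow> real" where
  "objf n \<sigma> \<gamma>P c \<gamma> \<nu> \<rho> zQ zS =
     - (1 / real n) * (\<Sum>i<n.
          (zQ i i)\<^sup>2 / (2 * c i)
        + \<gamma> i / 2 * (\<Sum>j<n. (\<nu> j)\<^sup>2 * (zQ i j)\<^sup>2)
        + \<gamma> i * \<sigma>\<^sup>2 / 2 * (zS i)\<^sup>2
        + \<gamma> i * \<sigma> / sqrt (real n) * zS i * (\<Sum>j<n. \<rho> j * \<nu> j * zQ i j)
        - zQ i i / c i)
     - \<gamma>P / (2 * (real n)\<^sup>2) * (\<Sum>i<n.
          (\<nu> i - \<nu> i * (\<Sum>j<n. zQ j i) - \<rho> i * \<sigma> / sqrt (real n) * (\<Sum>j<n. zS j))\<^sup>2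
        + (1 - (\<rho> i)\<^sup>2) * \<sigma>\<^sup>2 / real n * (\<Sum>j<n. zS j)\<^sup>2)"

definition is_maximiser ::
  "nat \<Rightarrow> real \<Rightarrow> real \<Rightarrow> (nat \<Rightarrow> real) \<Rightarrow> (nat \<Rightarrow> real) \<Rightarrow> (nat \<Rightarrow> real)
   \<Rightarrow> (nat \<Rightarrow> real) \<Rightarrow> (nat \<Rightarrow> nat \<Rightarrow> real) \<Rightarrow> (nat \<Rightarrow> real) \<Rightarrow> bool" where
  "is_maximiser n \<sigma> \<gamma>P c \<gamma> \<nu> \<rho> zQ zS \<longleftrightarrow>
     (\<forall>zQ' zS'. objf n \<sigma> \<gamma>P c \<gamma> \<nu> \<rho> zQ' zS' \<le> objf n \<sigma> \<gamma>P c \<gamma> \<nu> \<rho> zQ zS)"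

definition hA :: "real \<Rightarrow> real \<Rightarrow> real \<Rightarrow> real" where
  "hA c \<gamma> \<nu> = \<gamma> + 1 / (c * \<nu>\<^sup>2)"

definition h\<delta> :: "real \<Rightarrow> real \<Rightarrow> real \<Rightarrow> real" where
  "h\<delta> c \<gamma> \<nu> = 1 / (hA c \<gamma> \<nu> * c * \<nu>\<^sup>2)"

definition h\<alpha> :: "nat \<Rightarrow> real \<Rightarrow> real \<Rightarrow> real" where
  "h\<alpha> n \<gamma>P \<gamma> = \<gamma>P / (real n * \<gamma>)"

definition h\<beta> :: "nat \<Rightarrow> real \<Rightarrow> real \<Rightarrow> real" where
  "h\<beta> n \<sigma> \<rho> = \<sigma> * \<rho> / sqrt (real n)"

definition h\<kappa>t :: "nat \<Rightarrow> real \<Rightarrow> real \<Rightarrow> real \<Rightarrow> real \<Rightarrow> real" where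
  "h\<kappa>t n \<gamma>P c \<gamma> \<nu> = hA c \<gamma> \<nu>
     + \<gamma>P / real n * ((real n - 1) * hA c \<gamma> \<nu> / \<gamma> + 1)"

definition h\<kappa> :: "nat \<Rightarrow> real \<Rightarrow> real \<Rightarrow> real \<Rightarrow> real \<Rightarrow> real" where
  "h\<kappa> n \<gamma>P c \<gamma> \<nu> = h\<kappa>t n \<gamma>P c \<gamma> \<nu> / hA c \<gamma> \<nu>"

definition h\<Delta> :: "nat \<Rightarrow> real \<Rightarrow> real \<Rightarrow> real \<Rightarrow> real \<Rightarrow> real \<Rightarrow> real" where
  "h\<Delta> n \<gamma>P c \<gamma> \<nu> \<rho> = (\<gamma> + \<gamma>P) * (1 - \<rho>\<^sup>2)
     + \<gamma> * \<rho>\<^sup>2 * h\<delta> c \<gamma> \<nu> / real n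
     + \<gamma>P * \<rho>\<^sup>2 * (h\<delta> c \<gamma> \<nu>)\<^sup>2 / ((real n)\<^sup>2 * h\<kappa> n \<gamma>P c \<gamma> \<nu>)"

end

theory Submission
  imports Defs
begin


lemma alg:
  fixes N r \<sigma> \<gamma>P c \<gamma> \<nu> \<rho> :: real
  assumes r: "r > 0" "N = r^2" and pos: "\<sigma> > 0" "\<gamma>P > 0" "c > 0" "\<gamma> > 0" "\<nu> > 0"
    and rho: "-1 < \<rho>" "\<rho> < 1"
    and A: "A = \<gamma> + 1 / (c * \<nu>\<^sup>2)" and dl: "\<delta> = 1 / (A * c * \<nu>\<^sup>2)"
    and al: "\<alpha> = \<gamma>P / (N * \<gamma>)" and be: "\<beta> = \<sigma> * \<rho> / r"
    and kt: "\<kappa>t = A + \<gamma>P / N * ((N - 1) * A / \<gamma> + 1)" and k: "\<kappa> = \<kappa>t / A"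
    and D: "\<Delta> = (\<gamma> + \<gamma>P) * (1 - \<rho>\<^sup>2) + \<gamma> * \<rho>\<^sup>2 * \<delta> / N + \<gamma>P * \<rho>\<^sup>2 * \<delta>\<^sup>2 / (N\<^sup>2 * \<kappa>)"
    and zs: "zs = - (\<rho> * \<gamma>) / (A * c * \<sigma> * \<nu> * r * \<Delta>) * (1 - \<gamma>P / (N * \<kappa>t))"
    and K: "K = 1 / \<kappa> * (\<gamma> * \<nu> / A - \<beta> * \<delta> * zs)"
    and zo: "zo = 1 / \<nu> * (\<alpha> * K - \<beta> * zs)"
    and zd: "zd = 1 / (\<nu> * A) * (\<gamma>P / N * K - \<gamma> * \<beta> * zs + 1 / (c * \<nu>))"
    and N1: "N \<ge> 1"
  shows "\<Delta> > 0 \<and> zd / c - 1 / c + \<gamma> * \<nu>\<^sup>2 * (zd - zo) = 0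
    \<and> \<gamma> * \<nu>\<^sup>2 * zo + \<gamma> * \<sigma> * \<rho> * \<nu> * zs / r = \<gamma>P * (\<nu> - \<nu> * (zd + (N - 1) * zo) - \<rho> * \<sigma> / r * (N * zs)) * \<nu> / N
    \<and> \<gamma> * \<sigma>\<^sup>2 * zs + \<gamma> * \<sigma> * \<rho> * \<nu> * (zd + (N - 1) * zo) / r
       + \<gamma>P / 2 * (- 2 * (\<nu> - \<nu> * (zd + (N - 1) * zo) - \<rho> * \<sigma> / r * (N * zs)) * \<rho> * \<sigma> / r
            + 2 * (1 - \<rho>\<^sup>2) * \<sigma>\<^sup>2 * zs) = 0"
proof -
  have N: "N > 0" using r by simp
  have Ap: "A > 0" using A pos by (simp add: add_pos_nonneg)
  have dp: "\<delta> > 0" using dl Ap pos by simp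
  have ktp: "\<kappa>t > 0" unfolding kt using Ap pos N N1
    by (intro add_pos_nonneg mult_nonneg_nonneg) auto
  have kp: "\<kappa> > 0" using k ktp Ap by simp
  have Dp: "\<Delta> > 0"
  proof -
    have "\<bar>\<rho>\<bar> < 1" using rho by linarith
    then have "\<rho>\<^sup>2 < 1" by (simp add: abs_square_less_1)
    then have "1 - \<rho>\<^sup>2 > 0" by simp
    then have "(\<gamma> + \<gamma>P) * (1 - \<rho>\<^sup>2) > 0" using pos by simp
    moreover have "\<gamma> * \<rho>\<^sup>2 * \<delta> / N \<ge> 0" using pos dp N by simp
    moreover have "\<gamma>P * \<rho>\<^sup>2 * \<delta>\<^sup>2 / (N\<^sup>2 * \<kappa>) \<ge> 0" using pos dp N kp by simp
    ultimately show ?thesis using D by linarith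
  qed
  have hA: "1/c + \<gamma>*\<nu>\<^sup>2 = \<nu>\<^sup>2*A" using A pos by (simp add: field_simps)
  have zd1: "\<nu>*A*zd = \<gamma>P / N * K - \<gamma> * \<beta> * zs + 1 / (c * \<nu>)" using zd pos Ap by simp
  have zo1: "\<gamma>*\<nu>*zo = \<gamma>P / N * K - \<gamma> * \<beta> * zs" 
  proof -
    have e1: "\<nu>*zo = \<alpha>*K - \<beta>*zs" using zo pos by (simp add: field_simps)
    have e2: "\<gamma>*\<alpha> = \<gamma>P/N" using al pos by (simp add: field_simps)
    have "\<gamma>*\<nu>*zo = \<gamma>*(\<nu>*zo)" by simp
    also have "\<dots> = (\<gamma>*\<alpha>)*K - \<gamma>*\<beta>*zs" unfolding e1 by (simp add: algebra_simps)
    finally show ?thesis unfolding e2 .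
  qed
  have "\<nu>\<^sup>2*A*zd = \<nu>*(\<gamma>*\<nu>*zo) + 1/c"
  proof -
    have "\<nu>\<^sup>2*A*zd = \<nu>*(\<nu>*A*zd)" by (simp add: power2_eq_square)
    also have "\<dots> = \<nu>*(\<gamma>*\<nu>*zo) + 1/c" unfolding zd1 zo1 using pos by (simp add: field_simps)
    finally show ?thesis .
  qed
  have cT: "zd / c - 1 / c + \<gamma> * \<nu>\<^sup>2 * (zd - zo) = 0"
  proof -
    have "zd / c - 1 / c + \<gamma> * \<nu>\<^sup>2 * (zd - zo) = zd*(1/c + \<gamma>*\<nu>\<^sup>2) - 1/c - \<nu>*(\<gamma>*\<nu>*zo)"
      by (simp add: algebra_simps power2_eq_square)
    also have "\<dots> = 0" unfolding hA using \<open>\<nu>\<^sup>2*A*zd = _\<close> by (simp add: algebra_simps)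
    finally show ?thesis .
  qed
  define a where "a = \<nu> - \<nu>*(zd + (N-1)*zo) - \<rho>*\<sigma>/r*(N*zs)"
  have a1: "a = \<gamma>*\<nu>/A - \<beta>*\<delta>*zs - K*(\<kappa> - 1)"
  proof -
    have f1: "\<rho>*\<sigma>/r*(N*zs) = N*\<beta>*zs" using be r by (simp add: field_simps)
    have f2: "\<nu>*zd = (\<gamma>P / N * K - \<gamma> * \<beta> * zs + 1 / (c * \<nu>))/A"
      using zd pos Ap by (simp add: field_simps)
    have f3: "\<nu>*zo = \<alpha> * K - \<beta> * zs" using zo pos by (simp add: field_simps)
    have "a = \<nu> - \<nu>*zd - (N-1)*(\<nu>*zo) - \<rho>*\<sigma>/r*(N*zs)" unfolding a_def by (simp add: algebra_simps)
    then have "a = \<nu> - (\<gamma>P / N * K - \<gamma> * \<beta> * zs + 1 / (c * \<nu>))/A - (N-1)*(\<alpha> * K - \<beta> * zs) - N*\<beta>*zs"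
      unfolding f1 f2 f3 .
    also have "\<dots> = \<gamma>*\<nu>/A - \<beta>*\<delta>*zs - K*(\<kappa> - 1)"
    proof -
      have h1: "1/(c*\<nu>)/A = \<nu> - \<nu>*\<gamma>/A" using A Ap pos by (simp add: field_simps power2_eq_square)
      have dl2: "\<delta> = 1 - \<gamma>/A"
      proof -
        have "A - \<gamma> = 1/(c*\<nu>\<^sup>2)" using A by simp
        then have "\<delta> = (A - \<gamma>)/A" unfolding dl by (simp add: mult_ac)
        then show ?thesis using Ap by (simp add: diff_divide_distrib)
      qed
      have hk: "\<kappa> = 1 + \<gamma>P/N*((N-1)/\<gamma> + 1/A)" using k kt Ap pos N by (simp add: field_simps)
      have h2: "(\<gamma>P / N * K - \<gamma> * \<beta> * zs + 1 / (c * \<nu>))/A = (\<gamma>P / N * K - \<gamma> * \<beta> * zs)/A + 1/(c*\<nu>)/A"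
        by (simp add: add_divide_distrib)
      show ?thesis unfolding h2 h1 dl2 hk al using Ap pos N by (simp add: field_simps)
    qed
    finally show ?thesis .
  qed
  have Kk: "K*\<kappa> = \<gamma>*\<nu>/A - \<beta>*\<delta>*zs" using K kp by (simp add: field_simps)
  have aK: "a = K" using a1 Kk by (simp add: algebra_simps)
  have cD: "\<gamma>*\<nu>\<^sup>2*zo + \<gamma>*\<sigma>*\<rho>*\<nu>*zs/r = \<gamma>P*a*\<nu>/N"
  proof -
    have "\<gamma>*\<nu>\<^sup>2*zo + \<gamma>*\<sigma>*\<rho>*\<nu>*zs/r = \<nu>*(\<gamma>*\<nu>*zo + \<gamma>*\<beta>*zs)"
      unfolding be by (simp add: algebra_simps power2_eq_square)
    also have "\<dots> = \<nu>*(\<gamma>P/N*K)" using zo1 by simp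
    finally show ?thesis unfolding aK by simp
  qed
  have h1: "1/(c*\<nu>)/A = \<nu> - \<nu>*\<gamma>/A" using A Ap pos by (simp add: field_simps power2_eq_square)
  have Ag: "A - \<gamma> = 1/(c*\<nu>\<^sup>2)" using A by simp
  have dl2: "\<delta> = 1 - \<gamma>/A"
  proof -
    have "\<delta> = (A - \<gamma>)/A" unfolding dl Ag by (simp add: mult_ac)
    then show ?thesis using Ap by (simp add: diff_divide_distrib)
  qed
  have hk: "\<kappa> = 1 + \<gamma>P/N*((N-1)/\<gamma> + 1/A)" using k kt Ap pos N by (simp add: field_simps)
  have bN: "\<rho>*\<sigma>/r*(N*\<beta>) = \<rho>\<^sup>2*\<sigma>\<^sup>2" unfolding be r(2) using r(1) by (simp add: field_simps power2_eq_square)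
  have rb: "\<rho>*\<sigma>/r*\<beta> = \<rho>\<^sup>2*\<sigma>\<^sup>2/N" unfolding be r(2) using r(1) by (simp add: field_simps power2_eq_square)
  define M where "M = 1 + \<gamma>P*(N-1)/(N*\<gamma>)"
  have F1: "\<kappa> - \<gamma>P/(N*A) = M" unfolding hk M_def using N Ap pos by (simp add: field_simps)
  have F2: "c*\<nu>\<^sup>2*(A*\<kappa> - (\<gamma>+\<gamma>P)) = M"
  proof -
    have "A*\<kappa> - (\<gamma>+\<gamma>P) = (A - \<gamma>)*M" unfolding hk M_def using N Ap pos by (simp add: field_simps)
    then show ?thesis unfolding Ag using pos by simp
  qed
  have s1: "\<Delta> = (\<gamma>+\<gamma>P)*(1-\<rho>\<^sup>2) + (\<gamma>+\<gamma>P)*\<rho>\<^sup>2*\<delta>/(N*\<kappa>)"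
  proof -
    have "\<gamma>*(\<kappa>-1) + \<gamma>P*\<delta>/N = \<gamma>P" unfolding hk dl2 using N Ap pos by (simp add: field_simps)
    then have "\<gamma> + \<gamma>P*\<delta>/(N*\<kappa>) = (\<gamma>+\<gamma>P)/\<kappa>" using kp N by (simp add: field_simps)
    then have "\<gamma> * \<rho>\<^sup>2 * \<delta> / N + \<gamma>P * \<rho>\<^sup>2 * \<delta>\<^sup>2 / (N\<^sup>2 * \<kappa>) = (\<gamma>+\<gamma>P)*\<rho>\<^sup>2*\<delta>/(N*\<kappa>)"
    proof -
      assume e: "\<gamma> + \<gamma>P*\<delta>/(N*\<kappa>) = (\<gamma>+\<gamma>P)/\<kappa>"
      have "\<gamma> * \<rho>\<^sup>2 * \<delta> / N + \<gamma>P * \<rho>\<^sup>2 * \<delta>\<^sup>2 / (N\<^sup>2 * \<kappa>) = (\<gamma> + \<gamma>P*\<delta>/(N*\<kappa>))*\<rho>\<^sup>2*\<delta>/N"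
        using N kp by (simp add: field_simps power2_eq_square)
      also have "\<dots> = (\<gamma>+\<gamma>P)*\<rho>\<^sup>2*\<delta>/(N*\<kappa>)" unfolding e using N kp by (simp add: field_simps)
      finally show ?thesis .
    qed
    then show ?thesis unfolding D by simp
  qed
  have Fz: "zs*\<Delta>*\<kappa>*\<sigma>\<^sup>2 = -(\<rho>*\<sigma>*\<gamma>*\<nu>/r)*(\<kappa> - (\<gamma>+\<gamma>P)/A)"
  proof -
    have z1: "zs*\<Delta> = -(\<rho>*\<gamma>)/(A*c*\<sigma>*\<nu>*r)*(1 - \<gamma>P/(N*\<kappa>t))" unfolding zs using Dp by simp
    have z2: "(1 - \<gamma>P/(N*\<kappa>t))*\<kappa> = M" unfolding F1[symmetric] k using Ap ktp N by (simp add: field_simps)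
    have z3: "\<kappa> - (\<gamma>+\<gamma>P)/A = M/(A*c*\<nu>\<^sup>2)" unfolding F2[symmetric] using Ap pos by (simp add: field_simps)
    have "zs*\<Delta>*\<kappa>*\<sigma>\<^sup>2 = -(\<rho>*\<gamma>)/(A*c*\<sigma>*\<nu>*r)*((1 - \<gamma>P/(N*\<kappa>t))*\<kappa>)*\<sigma>\<^sup>2" unfolding z1 by simp
    also have "\<dots> = -(\<rho>*\<gamma>)/(A*c*\<sigma>*\<nu>*r)*M*\<sigma>\<^sup>2" unfolding z2 ..
    also have "\<dots> = -(\<rho>*\<sigma>*\<gamma>*\<nu>/r)*(M/(A*c*\<nu>\<^sup>2))" using Ap pos r(1) by (simp add: field_simps power2_eq_square)
    finally show ?thesis unfolding z3 .
  qed
  have core: "\<sigma>\<^sup>2*zs*(\<gamma>+\<gamma>P)*(1-\<rho>\<^sup>2) + \<rho>*\<sigma>/r*(\<gamma>*\<nu> - (\<gamma>+\<gamma>P)*K) = 0"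
  proof -
    have "\<kappa>*(\<sigma>\<^sup>2*zs*(\<gamma>+\<gamma>P)*(1-\<rho>\<^sup>2) + \<rho>*\<sigma>/r*(\<gamma>*\<nu> - (\<gamma>+\<gamma>P)*K))
        = \<sigma>\<^sup>2*zs*(\<gamma>+\<gamma>P)*(1-\<rho>\<^sup>2)*\<kappa> + \<rho>*\<sigma>/r*\<gamma>*\<nu>*\<kappa> - \<rho>*\<sigma>/r*(\<gamma>+\<gamma>P)*(K*\<kappa>)"
      using r(1) by (simp add: field_simps)
    also have "\<dots> = \<sigma>\<^sup>2*zs*(\<gamma>+\<gamma>P)*(1-\<rho>\<^sup>2)*\<kappa> + \<rho>*\<sigma>/r*\<gamma>*\<nu>*\<kappa> - \<rho>*\<sigma>/r*(\<gamma>+\<gamma>P)*(\<gamma>*\<nu>/A)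
         + (\<rho>*\<sigma>/r*\<beta>)*(\<gamma>+\<gamma>P)*\<delta>*zs"
      unfolding Kk using r(1) Ap by (simp add: field_simps)
    also have "\<dots> = zs*\<sigma>\<^sup>2*\<kappa>*((\<gamma>+\<gamma>P)*(1-\<rho>\<^sup>2) + (\<gamma>+\<gamma>P)*\<rho>\<^sup>2*\<delta>/(N*\<kappa>)) + (\<rho>*\<sigma>*\<gamma>*\<nu>/r)*(\<kappa> - (\<gamma>+\<gamma>P)/A)"
      unfolding rb using kp N r(1) Ap by (simp add: field_simps)
    also have "\<dots> = 0" unfolding s1[symmetric] using Fz by (simp add: algebra_simps)
    finally show ?thesis using kp by simp
  qed
  have cE: "\<gamma>*\<sigma>\<^sup>2*zs + \<gamma>*\<sigma>*\<rho>*\<nu>*(zd + (N-1)*zo)/r + \<gamma>P/2*(-2*a*\<rho>*\<sigma>/r + 2*(1-\<rho>\<^sup>2)*\<sigma>\<^sup>2*zs) = 0"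
  proof -
    have f1: "\<rho>*\<sigma>/r*(N*zs) = N*\<beta>*zs" using be r by (simp add: field_simps)
    have i1: "\<nu>*(zd + (N-1)*zo) = \<nu> - K - N*\<beta>*zs" using aK unfolding a_def f1 by simp
    have "\<gamma>*\<sigma>\<^sup>2*zs + \<gamma>*\<sigma>*\<rho>*\<nu>*(zd + (N-1)*zo)/r + \<gamma>P/2*(-2*a*\<rho>*\<sigma>/r + 2*(1-\<rho>\<^sup>2)*\<sigma>\<^sup>2*zs)
       = \<gamma>*\<sigma>\<^sup>2*zs + \<gamma>*(\<rho>*\<sigma>/r)*(\<nu>*(zd + (N-1)*zo)) + \<gamma>P*(-K*\<rho>*\<sigma>/r + (1-\<rho>\<^sup>2)*\<sigma>\<^sup>2*zs)"
      unfolding aK using r(1) by (simp add: field_simps)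
    also have "\<dots> = \<gamma>*\<sigma>\<^sup>2*zs + \<gamma>*(\<rho>*\<sigma>/r)*(\<nu> - K) - \<gamma>*zs*(\<rho>*\<sigma>/r*(N*\<beta>)) + \<gamma>P*(-K*\<rho>*\<sigma>/r + (1-\<rho>\<^sup>2)*\<sigma>\<^sup>2*zs)"
      unfolding i1 using r(1) by (simp add: field_simps)
    also have "\<dots> = \<sigma>\<^sup>2*zs*(\<gamma>+\<gamma>P)*(1-\<rho>\<^sup>2) + \<rho>*\<sigma>/r*(\<gamma>*\<nu> - (\<gamma>+\<gamma>P)*K)"
      unfolding bN using r(1) by (simp add: field_simps)
    finally show ?thesis using core by simp
  qed
  show ?thesis using Dp cT cD cE unfolding a_def by simp
qed


lemma sum_if1:
  fixes a b :: "nat \<Rightarrow> real"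
  assumes "i < n"
  shows "(\<Sum>j<n. if i = j then a j else b j) = (\<Sum>j<n. b j) + a i - b i"
proof -
  have "(\<Sum>j<n. if i = j then a j else b j) = (\<Sum>j<n. b j + (if i = j then a j - b j else 0))"
    by (rule sum.cong) auto
  also have "\<dots> = (\<Sum>j<n. b j) + (a i - b i)" using assms by (simp add: sum.distrib)
  finally show ?thesis by simp
qed

lemma sum_if2:
  fixes a b :: "nat \<Rightarrow> real"
  assumes "i < n"
  shows "(\<Sum>j<n. if j = i then a j else b j) = (\<Sum>j<n. b j) + a i - b i"
  using sum_if1[OF assms, of a b] by (simp add: eq_commute)

lemma sq_sum:
  fixes d :: "nat \<Rightarrow> real"
  shows "(\<Sum>j<n. k * (z + d j)\<^sup>2) = k * (real n * z\<^sup>2 + 2 * z * (\<Sum>j<n. d j) + (\<Sum>j<n. (d j)\<^sup>2))"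
  by (simp add: power2_sum sum.distrib sum_distrib_left algebra_simps)

lemma expansion:
  fixes n :: nat and \<sigma> \<gamma>P c \<gamma> \<nu> \<rho> zd zo zs :: real and d :: "nat \<Rightarrow> nat \<Rightarrow> real" and e :: "nat \<Rightarrow> real"
  assumes n: "n \<ge> 1" and c: "c > 0"
  defines "N \<equiv> real n" and "r \<equiv> sqrt (real n)"
  defines "Rs \<equiv> zd + (N - 1) * zo"
  defines "a \<equiv> \<nu> - \<nu> * Rs - \<rho> * \<sigma> / r * (N * zs)"
  defines "gs \<equiv> zd\<^sup>2 / (2 * c) + \<gamma> / 2 * (\<nu>\<^sup>2 * (zd\<^sup>2 + (N - 1) * zo\<^sup>2)) + \<gamma> * \<sigma>\<^sup>2 / 2 * zs\<^sup>2
                 + \<gamma> * \<sigma> / r * zs * (\<rho> * \<nu> * Rs) - zd / c"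
  defines "hs \<equiv> a\<^sup>2 + (1 - \<rho>\<^sup>2) * \<sigma>\<^sup>2 * N * zs\<^sup>2"
  defines "cT \<equiv> zd / c - 1 / c + \<gamma> * \<nu>\<^sup>2 * (zd - zo)"
  defines "cD \<equiv> \<gamma> * \<nu>\<^sup>2 * zo + \<gamma> * \<sigma> * \<rho> * \<nu> * zs / r"
  defines "cE \<equiv> \<gamma> * \<sigma>\<^sup>2 * zs + \<gamma> * \<sigma> * \<rho> * \<nu> * Rs / r"
  defines "q \<equiv> \<lambda>i. (d i i)\<^sup>2 / (2 * c) + \<gamma> * \<nu>\<^sup>2 / 2 * (\<Sum>j<n. (d i j)\<^sup>2) + \<gamma> * \<sigma>\<^sup>2 / 2 * (e i)\<^sup>2
                 + \<gamma> * \<sigma> * \<rho> * \<nu> / r * e i * (\<Sum>j<n. d i j)"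
  defines "qh \<equiv> \<lambda>i. (\<nu> * (\<Sum>j<n. d j i) + \<rho> * \<sigma> / r * (\<Sum>j<n. e j))\<^sup>2 + (1 - \<rho>\<^sup>2) * \<sigma>\<^sup>2 / N * (\<Sum>j<n. e j)\<^sup>2"
  shows "objf n \<sigma> \<gamma>P (\<lambda>_. c) (\<lambda>_. \<gamma>) (\<lambda>_. \<nu>) (\<lambda>_. \<rho>) (\<lambda>i j. (if i = j then zd else zo) + d i j) (\<lambda>i. zs + e i)
    = - (1 / N) * (N * gs + cT * (\<Sum>i<n. d i i) + cD * (\<Sum>i<n. \<Sum>j<n. d i j) + cE * (\<Sum>i<n. e i))
      - \<gamma>P / (2 * N\<^sup>2) * (N * hs - 2 * a * \<nu> * (\<Sum>i<n. \<Sum>j<n. d i j)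
           + N * (- 2 * a * \<rho> * \<sigma> / r + 2 * (1 - \<rho>\<^sup>2) * \<sigma>\<^sup>2 * zs) * (\<Sum>i<n. e i))
      - ((1 / N) * (\<Sum>i<n. q i) + \<gamma>P / (2 * N\<^sup>2) * (\<Sum>i<n. qh i))"
proof -
  have Np: "N > 0" unfolding N_def using n by simp
  have cp: "c > 0" by (rule c)
  have rp: "r > 0" unfolding r_def using n by simp
  have rn: "sqrt (real n) = r" unfolding r_def ..
  have Nn: "real n = N" unfolding N_def ..
  define T where "T = (\<Sum>i<n. d i i)"
  define Dt where "Dt = (\<Sum>i<n. \<Sum>j<n. d i j)"
  define E where "E = (\<Sum>i<n. e i)"
  have gi: "((if i = i then zd else zo) + d i i)\<^sup>2 / (2 * c)
        + \<gamma> / 2 * (\<Sum>j<n. \<nu>\<^sup>2 * ((if i = j then zd else zo) + d i j)\<^sup>2)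
        + \<gamma> * \<sigma>\<^sup>2 / 2 * (zs + e i)\<^sup>2
        + \<gamma> * \<sigma> / sqrt (real n) * (zs + e i) * (\<Sum>j<n. \<rho> * \<nu> * ((if i = j then zd else zo) + d i j))
        - ((if i = i then zd else zo) + d i i) / c
      = gs + cT * d i i + cD * (\<Sum>j<n. d i j) + cE * e i + q i" if i: "i < n" for i
  proof -
    have s1: "(\<Sum>j<n. \<nu>\<^sup>2 * ((if i = j then zd else zo) + d i j)\<^sup>2)
        = \<nu>\<^sup>2 * (N * zo\<^sup>2 + 2 * zo * (\<Sum>j<n. d i j) + (\<Sum>j<n. (d i j)\<^sup>2)) + \<nu>\<^sup>2 * (zd + d i i)\<^sup>2 - \<nu>\<^sup>2 * (zo + d i i)\<^sup>2"
    proof -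
      have "(\<Sum>j<n. \<nu>\<^sup>2 * ((if i = j then zd else zo) + d i j)\<^sup>2)
          = (\<Sum>j<n. if i = j then \<nu>\<^sup>2 * (zd + d i j)\<^sup>2 else \<nu>\<^sup>2 * (zo + d i j)\<^sup>2)"
        by (rule sum.cong) auto
      also have "\<dots> = (\<Sum>j<n. \<nu>\<^sup>2 * (zo + d i j)\<^sup>2) + \<nu>\<^sup>2 * (zd + d i i)\<^sup>2 - \<nu>\<^sup>2 * (zo + d i i)\<^sup>2"
        by (rule sum_if1[OF i])
      finally show ?thesis unfolding sq_sum Nn .
    qed
    have s2: "(\<Sum>j<n. \<rho> * \<nu> * ((if i = j then zd else zo) + d i j))
        = \<rho> * \<nu> * (N * zo + (\<Sum>j<n. d i j)) + \<rho> * \<nu> * (zd - zo)"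
    proof -
      have "(\<Sum>j<n. \<rho> * \<nu> * ((if i = j then zd else zo) + d i j))
          = (\<Sum>j<n. if i = j then \<rho> * \<nu> * (zd + d i j) else \<rho> * \<nu> * (zo + d i j))"
        by (rule sum.cong) auto
      also have "\<dots> = (\<Sum>j<n. \<rho> * \<nu> * (zo + d i j)) + \<rho> * \<nu> * (zd + d i i) - \<rho> * \<nu> * (zo + d i i)"
        by (rule sum_if1[OF i])
      also have "\<dots> = \<rho> * \<nu> * (N * zo + (\<Sum>j<n. d i j)) + \<rho> * \<nu> * (zd - zo)"
        by (simp add: sum.distrib sum_distrib_left[symmetric] Nn algebra_simps)
      finally show ?thesis .
    qed
    show ?thesis unfolding s1 s2 rn q_def gs_def cT_def cD_def cE_def Rs_def
      using cp rp by (simp add: field_simps power2_eq_square)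
  qed
  have G: "(\<Sum>i<n. ((if i = i then zd else zo) + d i i)\<^sup>2 / (2 * c)
        + \<gamma> / 2 * (\<Sum>j<n. \<nu>\<^sup>2 * ((if i = j then zd else zo) + d i j)\<^sup>2)
        + \<gamma> * \<sigma>\<^sup>2 / 2 * (zs + e i)\<^sup>2
        + \<gamma> * \<sigma> / sqrt (real n) * (zs + e i) * (\<Sum>j<n. \<rho> * \<nu> * ((if i = j then zd else zo) + d i j))
        - ((if i = i then zd else zo) + d i i) / c)
      = N * gs + cT * T + cD * Dt + cE * E + (\<Sum>i<n. q i)"
  proof -
    have "(\<Sum>i<n. ((if i = i then zd else zo) + d i i)\<^sup>2 / (2 * c)
        + \<gamma> / 2 * (\<Sum>j<n. \<nu>\<^sup>2 * ((if i = j then zd else zo) + d i j)\<^sup>2)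
        + \<gamma> * \<sigma>\<^sup>2 / 2 * (zs + e i)\<^sup>2
        + \<gamma> * \<sigma> / sqrt (real n) * (zs + e i) * (\<Sum>j<n. \<rho> * \<nu> * ((if i = j then zd else zo) + d i j))
        - ((if i = i then zd else zo) + d i i) / c)
      = (\<Sum>i<n. gs + cT * d i i + cD * (\<Sum>j<n. d i j) + cE * e i + q i)"
      by (rule sum.cong[OF refl]) (simp only: gi lessThan_iff)
    also have "\<dots> = N * gs + cT * T + cD * Dt + cE * E + (\<Sum>i<n. q i)"
      unfolding T_def Dt_def E_def by (simp add: sum.distrib sum_distrib_left Nn)
    finally show ?thesis .
  qed
  have hi: "(\<nu> - \<nu> * (\<Sum>j<n. (if j = i then zd else zo) + d j i) - \<rho> * \<sigma> / sqrt (real n) * (\<Sum>j<n. zs + e j))\<^sup>2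
        + (1 - \<rho>\<^sup>2) * \<sigma>\<^sup>2 / real n * (\<Sum>j<n. zs + e j)\<^sup>2
      = hs + (- 2 * a * \<nu> * (\<Sum>j<n. d j i) - 2 * a * \<rho> * \<sigma> / r * E + 2 * (1 - \<rho>\<^sup>2) * \<sigma>\<^sup>2 * zs * E) + qh i"
    if i: "i < n" for i
  proof -
    have c1: "(\<Sum>j<n. (if j = i then zd else zo) + d j i) = Rs + (\<Sum>j<n. d j i)"
    proof -
      have "(\<Sum>j<n. (if j = i then zd else zo) + d j i) = (\<Sum>j<n. (if j = i then zd else zo)) + (\<Sum>j<n. d j i)"
        by (simp add: sum.distrib)
      also have "(\<Sum>j<n. (if j = i then zd else zo)) = (\<Sum>j<n. zo) + zd - zo"
        by (rule sum_if2[OF i])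
      finally show ?thesis unfolding Rs_def by (simp add: Nn algebra_simps)
    qed
    have c2: "(\<Sum>j<n. zs + e j) = N * zs + E" unfolding E_def by (simp add: sum.distrib Nn)
    show ?thesis unfolding rn unfolding c1 c2 Nn hs_def qh_def a_def E_def[symmetric]
      using Np rp by (simp add: field_simps power2_eq_square)
  qed
  have H: "(\<Sum>i<n. (\<nu> - \<nu> * (\<Sum>j<n. (if j = i then zd else zo) + d j i) - \<rho> * \<sigma> / sqrt (real n) * (\<Sum>j<n. zs + e j))\<^sup>2
        + (1 - \<rho>\<^sup>2) * \<sigma>\<^sup>2 / real n * (\<Sum>j<n. zs + e j)\<^sup>2)
      = N * hs - 2 * a * \<nu> * Dt + N * (- 2 * a * \<rho> * \<sigma> / r + 2 * (1 - \<rho>\<^sup>2) * \<sigma>\<^sup>2 * zs) * E + (\<Sum>i<n. qh i)"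
  proof -
    have "(\<Sum>i<n. (\<nu> - \<nu> * (\<Sum>j<n. (if j = i then zd else zo) + d j i) - \<rho> * \<sigma> / sqrt (real n) * (\<Sum>j<n. zs + e j))\<^sup>2
        + (1 - \<rho>\<^sup>2) * \<sigma>\<^sup>2 / real n * (\<Sum>j<n. zs + e j)\<^sup>2)
      = (\<Sum>i<n. hs + (- 2 * a * \<nu> * (\<Sum>j<n. d j i) - 2 * a * \<rho> * \<sigma> / r * E + 2 * (1 - \<rho>\<^sup>2) * \<sigma>\<^sup>2 * zs * E) + qh i)"
      by (rule sum.cong[OF refl]) (simp only: hi lessThan_iff)
    also have "\<dots> = N * hs + (- 2 * a * \<nu> * (\<Sum>i<n. \<Sum>j<n. d j i) + N * (- 2 * a * \<rho> * \<sigma> / r * E + 2 * (1 - \<rho>\<^sup>2) * \<sigma>\<^sup>2 * zs * E)) + (\<Sum>i<n. qh i)"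
      by (simp add: sum.distrib sum_distrib_left Nn sum_subtractf right_diff_distrib)
    also have "(\<Sum>i<n. \<Sum>j<n. d j i) = Dt" unfolding Dt_def by (rule sum.swap)
    finally show ?thesis by (simp add: algebra_simps)
  qed
  have O: "objf n \<sigma> \<gamma>P (\<lambda>_. c) (\<lambda>_. \<gamma>) (\<lambda>_. \<nu>) (\<lambda>_. \<rho>) (\<lambda>i j. (if i = j then zd else zo) + d i j) (\<lambda>i. zs + e i)
     = - (1 / real n) * (\<Sum>i<n. ((if i = i then zd else zo) + d i i)\<^sup>2 / (2 * c)
        + \<gamma> / 2 * (\<Sum>j<n. \<nu>\<^sup>2 * ((if i = j then zd else zo) + d i j)\<^sup>2)
        + \<gamma> * \<sigma>\<^sup>2 / 2 * (zs + e i)\<^sup>2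
        + \<gamma> * \<sigma> / sqrt (real n) * (zs + e i) * (\<Sum>j<n. \<rho> * \<nu> * ((if i = j then zd else zo) + d i j))
        - ((if i = i then zd else zo) + d i i) / c)
       - \<gamma>P / (2 * (real n)\<^sup>2) * (\<Sum>i<n. (\<nu> - \<nu> * (\<Sum>j<n. (if j = i then zd else zo) + d j i) - \<rho> * \<sigma> / sqrt (real n) * (\<Sum>j<n. zs + e j))\<^sup>2
        + (1 - \<rho>\<^sup>2) * \<sigma>\<^sup>2 / real n * (\<Sum>j<n. zs + e j)\<^sup>2)"
    by (simp only: objf_def)
  show ?thesis unfolding O G H unfolding Nn T_def Dt_def E_def
    by (simp add: algebra_simps)

qed

definition Qt :: "nat \<Rightarrow> real \<Rightarrow> real \<Rightarrow> real \<Rightarrow> real \<Rightarrow> real \<Rightarrow> real \<Rightarrow> (nat \<Rightarrow> nat \<Rightarrow> real) \<Rightarrow> (nat \<Rightarrow> real) \<Rightarrow> real" where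
  "Qt n \<sigma> \<gamma>P c \<gamma> \<nu> \<rho> d e =
     (1 / real n) * (\<Sum>i<n. (d i i)\<^sup>2 / (2 * c) + \<gamma> * \<nu>\<^sup>2 / 2 * (\<Sum>j<n. (d i j)\<^sup>2) + \<gamma> * \<sigma>\<^sup>2 / 2 * (e i)\<^sup>2
                 + \<gamma> * \<sigma> * \<rho> * \<nu> / sqrt (real n) * e i * (\<Sum>j<n. d i j))
     + \<gamma>P / (2 * (real n)\<^sup>2) * (\<Sum>i<n. (\<nu> * (\<Sum>j<n. d j i) + \<rho> * \<sigma> / sqrt (real n) * (\<Sum>j<n. e j))\<^sup>2 + (1 - \<rho>\<^sup>2) * \<sigma>\<^sup>2 / real n * (\<Sum>j<n. e j)\<^sup>2)"

lemma expansion2: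
  fixes n :: nat and \<sigma> \<gamma>P c \<gamma> \<nu> \<rho> zd zo zs :: real and d :: "nat \<Rightarrow> nat \<Rightarrow> real" and e :: "nat \<Rightarrow> real"
  assumes n: "n \<ge> 1" and c: "c > 0"
    and hT: "zd / c - 1 / c + \<gamma> * \<nu>\<^sup>2 * (zd - zo) = 0"
    and hD: "\<gamma> * \<nu>\<^sup>2 * zo + \<gamma> * \<sigma> * \<rho> * \<nu> * zs / sqrt (real n)
       = \<gamma>P * (\<nu> - \<nu> * (zd + (real n - 1) * zo) - \<rho> * \<sigma> / sqrt (real n) * (real n * zs)) * \<nu> / real n"
    and hE: "\<gamma> * \<sigma>\<^sup>2 * zs + \<gamma> * \<sigma> * \<rho> * \<nu> * (zd + (real n - 1) * zo) / sqrt (real n)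
       + \<gamma>P / 2 * (- 2 * (\<nu> - \<nu> * (zd + (real n - 1) * zo) - \<rho> * \<sigma> / sqrt (real n) * (real n * zs)) * \<rho> * \<sigma> / sqrt (real n)
            + 2 * (1 - \<rho>\<^sup>2) * \<sigma>\<^sup>2 * zs) = 0"
  shows "objf n \<sigma> \<gamma>P (\<lambda>_. c) (\<lambda>_. \<gamma>) (\<lambda>_. \<nu>) (\<lambda>_. \<rho>) (\<lambda>i j. (if i = j then zd else zo) + d i j) (\<lambda>i. zs + e i)
    = objf n \<sigma> \<gamma>P (\<lambda>_. c) (\<lambda>_. \<gamma>) (\<lambda>_. \<nu>) (\<lambda>_. \<rho>) (\<lambda>i j. (if i = j then zd else zo)) (\<lambda>i. zs)
      - Qt n \<sigma> \<gamma>P c \<gamma> \<nu> \<rho> d e"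
proof -
  have Np: "real n > 0" using n by simp
  note X = expansion[OF n c, where d=d and e=e and zd=zd and zo=zo and zs=zs and \<sigma>=\<sigma> and \<gamma>P=\<gamma>P and \<gamma>=\<gamma> and \<nu>=\<nu> and \<rho>=\<rho>]
  note Y = expansion[OF n c, where d="\<lambda>i j. 0" and e="\<lambda>i. 0" and zd=zd and zo=zo and zs=zs and \<sigma>=\<sigma> and \<gamma>P=\<gamma>P and \<gamma>=\<gamma> and \<nu>=\<nu> and \<rho>=\<rho>]
  have Y': "objf n \<sigma> \<gamma>P (\<lambda>_. c) (\<lambda>_. \<gamma>) (\<lambda>_. \<nu>) (\<lambda>_. \<rho>) (\<lambda>i j. (if i = j then zd else zo)) (\<lambda>i. zs)
     = objf n \<sigma> \<gamma>P (\<lambda>_. c) (\<lambda>_. \<gamma>) (\<lambda>_. \<nu>) (\<lambda>_. \<rho>) (\<lambda>i j. (if i = j then zd else zo) + 0) (\<lambda>i. zs + 0)"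
    by simp
  have hD': "- (1 / real n) * (\<gamma> * \<nu>\<^sup>2 * zo + \<gamma> * \<sigma> * \<rho> * \<nu> * zs / sqrt (real n))
      + \<gamma>P / (2 * (real n)\<^sup>2) * (2 * (\<nu> - \<nu> * (zd + (real n - 1) * zo) - \<rho> * \<sigma> / sqrt (real n) * (real n * zs)) * \<nu>) = 0"
    unfolding hD using Np by (simp add: field_simps power2_eq_square)
  have hE': "- (1 / real n) * (\<gamma> * \<sigma>\<^sup>2 * zs + \<gamma> * \<sigma> * \<rho> * \<nu> * (zd + (real n - 1) * zo) / sqrt (real n))
      - \<gamma>P / (2 * (real n)\<^sup>2) * real n * (- 2 * (\<nu> - \<nu> * (zd + (real n - 1) * zo) - \<rho> * \<sigma> / sqrt (real n) * (real n * zs)) * \<rho> * \<sigma> / sqrt (real n)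
            + 2 * (1 - \<rho>\<^sup>2) * \<sigma>\<^sup>2 * zs) = 0"
  proof -
    let ?u = "\<gamma> * \<sigma>\<^sup>2 * zs + \<gamma> * \<sigma> * \<rho> * \<nu> * (zd + (real n - 1) * zo) / sqrt (real n)"
    let ?v = "- 2 * (\<nu> - \<nu> * (zd + (real n - 1) * zo) - \<rho> * \<sigma> / sqrt (real n) * (real n * zs)) * \<rho> * \<sigma> / sqrt (real n)
            + 2 * (1 - \<rho>\<^sup>2) * \<sigma>\<^sup>2 * zs"
    have aux: "\<And>N u g v::real. N > 0 \<Longrightarrow> u + g/2*v = 0 \<Longrightarrow> -(1/N)*u - g/(2*N\<^sup>2)*N*v = 0"
      by (simp add: field_simps power2_eq_square)
    show ?thesis by (rule aux[OF Np hE])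
  qed
  have aux2: "\<And>X Y N G cT T cD D cE E g H a \<nu> V Q T0 D0 E0 Q0 :: real.
     X = -(1/N)*(G + cT*T + cD*D + cE*E) - g/(2*N\<^sup>2)*(H - 2*a*\<nu>*D + N*V*E) - Q \<Longrightarrow>
     Y = -(1/N)*(G + cT*T0 + cD*D0 + cE*E0) - g/(2*N\<^sup>2)*(H - 2*a*\<nu>*D0 + N*V*E0) - Q0 \<Longrightarrow>
     T0 = 0 \<Longrightarrow> D0 = 0 \<Longrightarrow> E0 = 0 \<Longrightarrow> Q0 = 0 \<Longrightarrow> cT = 0 \<Longrightarrow>
     -(1/N)*cD + g/(2*N\<^sup>2)*(2*a*\<nu>) = 0 \<Longrightarrow> -(1/N)*cE - g/(2*N\<^sup>2)*N*V = 0 \<Longrightarrow> X = Y - Q"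
  proof -
    fix X Y N G cT T cD D cE E g H a \<nu> V Q T0 D0 E0 Q0 :: real
    assume hX: "X = -(1/N)*(G + cT*T + cD*D + cE*E) - g/(2*N\<^sup>2)*(H - 2*a*\<nu>*D + N*V*E) - Q"
      and hY: "Y = -(1/N)*(G + cT*T0 + cD*D0 + cE*E0) - g/(2*N\<^sup>2)*(H - 2*a*\<nu>*D0 + N*V*E0) - Q0"
      and z: "T0 = 0" "D0 = 0" "E0 = 0" "Q0 = 0" "cT = 0"
      and k1: "-(1/N)*cD + g/(2*N\<^sup>2)*(2*a*\<nu>) = 0" and k2: "-(1/N)*cE - g/(2*N\<^sup>2)*N*V = 0"
    have "X - (Y - Q) = T*(-(1/N)*cT) + D*(-(1/N)*cD + g/(2*N\<^sup>2)*(2*a*\<nu>)) + E*(-(1/N)*cE - g/(2*N\<^sup>2)*N*V)"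
      unfolding hX hY z by (simp add: algebra_simps add_divide_distrib diff_divide_distrib)
    then show "X = Y - Q" unfolding k1 k2 z by simp
  qed
  show ?thesis unfolding Y' Qt_def
    apply (rule aux2[OF X Y])
          apply simp
         apply simp
        apply simp
       apply simp
      apply (rule hT)
     apply (rule hD')
    apply (rule hE')
    done
qed

lemma Qt_pos:
  fixes n :: nat and \<sigma> \<gamma>P c \<gamma> \<nu> \<rho> :: real and d :: "nat \<Rightarrow> nat \<Rightarrow> real" and e :: "nat \<Rightarrow> real"
  assumes n: "n \<ge> 1" and pos: "c > 0" "\<gamma> > 0" "\<nu> > 0" "\<sigma> > 0" "\<gamma>P > 0" and rho: "-1 < \<rho>" "\<rho> < 1"
  shows "Qt n \<sigma> \<gamma>P c \<gamma> \<nu> \<rho> d e \<ge> 0"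
    and "Qt n \<sigma> \<gamma>P c \<gamma> \<nu> \<rho> d e \<le> 0 \<Longrightarrow> (\<forall>i<n. e i = 0) \<and> (\<forall>i<n. \<forall>j<n. d i j = 0)"
proof -
  define N where "N = real n"
  define r where "r = sqrt (real n)"
  have Np: "N > 0" unfolding N_def using n by simp
  have rp: "r > 0" unfolding r_def using n by simp
  have rr: "r\<^sup>2 = N" unfolding r_def N_def by simp
  have s2: "1 - \<rho>\<^sup>2 > 0"
  proof -
    have "\<bar>\<rho>\<bar> < 1" using rho by linarith
    then have "\<rho>\<^sup>2 < 1" by (simp add: abs_square_less_1)
    then show ?thesis by simp
  qed
  define q where "q = (\<lambda>i. (d i i)\<^sup>2 / (2 * c) + \<gamma> * \<nu>\<^sup>2 / 2 * (\<Sum>j<n. (d i j)\<^sup>2) + \<gamma> * \<sigma>\<^sup>2 / 2 * (e i)\<^sup>2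
                 + \<gamma> * \<sigma> * \<rho> * \<nu> / sqrt (real n) * e i * (\<Sum>j<n. d i j))"
  define qh where "qh = (\<lambda>i. (\<nu> * (\<Sum>j<n. d j i) + \<rho> * \<sigma> / sqrt (real n) * (\<Sum>j<n. e j))\<^sup>2 + (1 - \<rho>\<^sup>2) * \<sigma>\<^sup>2 / real n * (\<Sum>j<n. e j)\<^sup>2)"
  have QQ: "Qt n \<sigma> \<gamma>P c \<gamma> \<nu> \<rho> d e = (1 / N) * (\<Sum>i<n. q i) + \<gamma>P / (2 * N\<^sup>2) * (\<Sum>i<n. qh i)"
    unfolding Qt_def q_def qh_def N_def ..
  have qi: "q i = (d i i)\<^sup>2 / (2 * c) + \<gamma> / 2 * ((\<Sum>j<n. (\<nu> * d i j + \<rho> * \<sigma> * e i / r)\<^sup>2) + (1 - \<rho>\<^sup>2) * \<sigma>\<^sup>2 * (e i)\<^sup>2)" for i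
  proof -
    have "(\<Sum>j<n. (\<nu> * d i j + \<rho> * \<sigma> * e i / r)\<^sup>2) = \<nu>\<^sup>2 * (\<Sum>j<n. (d i j)\<^sup>2) + 2 * \<nu> * (\<rho> * \<sigma> * e i / r) * (\<Sum>j<n. d i j) + N * (\<rho> * \<sigma> * e i / r)\<^sup>2"
      unfolding N_def by (simp add: power2_sum sum.distrib sum_distrib_left power_mult_distrib algebra_simps sum_divide_distrib)
    also have "N * (\<rho> * \<sigma> * e i / r)\<^sup>2 = \<rho>\<^sup>2 * \<sigma>\<^sup>2 * (e i)\<^sup>2" unfolding rr[symmetric] using rp
      by (simp add: field_simps power2_eq_square)
    finally have Beq: "(\<Sum>j<n. (\<nu> * d i j + \<rho> * \<sigma> * e i / r)\<^sup>2) = \<nu>\<^sup>2 * (\<Sum>j<n. (d i j)\<^sup>2) + 2 * \<nu> * (\<rho> * \<sigma> * e i / r) * (\<Sum>j<n. d i j) + \<rho>\<^sup>2 * \<sigma>\<^sup>2 * (e i)\<^sup>2" .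
    show ?thesis unfolding q_def r_def[symmetric] Beq using rp by (simp add: field_simps power2_eq_square)
  qed
  have q0: "q i \<ge> 0" for i
    unfolding qi using pos s2 by (intro add_nonneg_nonneg mult_nonneg_nonneg sum_nonneg) auto
  have qh0: "qh i \<ge> 0" for i
    unfolding qh_def using pos s2 Np by (intro add_nonneg_nonneg mult_nonneg_nonneg) auto
  have S1: "(1 / N) * (\<Sum>i<n. q i) \<ge> 0" using Np q0 by (simp add: sum_nonneg)
  have S2: "\<gamma>P / (2 * N\<^sup>2) * (\<Sum>i<n. qh i) \<ge> 0" using Np qh0 pos by (simp add: sum_nonneg)
  show "Qt n \<sigma> \<gamma>P c \<gamma> \<nu> \<rho> d e \<ge> 0" unfolding QQ using S1 S2 by simp
  assume le: "Qt n \<sigma> \<gamma>P c \<gamma> \<nu> \<rho> d e \<le> 0"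
  have "(1 / N) * (\<Sum>i<n. q i) = 0" using le S1 S2 unfolding QQ by linarith
  then have "(\<Sum>i<n. q i) = 0" using Np by simp
  then have qz: "\<forall>i\<in>{..<n}. q i = 0" using sum_nonneg_eq_0_iff[of "{..<n}" q] q0 by simp
  have both: "e i = 0 \<and> (\<forall>j<n. d i j = 0)" if i: "i < n" for i
  proof -
    let ?A = "(d i i)\<^sup>2 / (2 * c)" and ?B = "(\<Sum>j<n. (\<nu> * d i j + \<rho> * \<sigma> * e i / r)\<^sup>2)"
      and ?C = "(1 - \<rho>\<^sup>2) * \<sigma>\<^sup>2 * (e i)\<^sup>2"
    have A0: "?A \<ge> 0" using pos by simp
    have B0: "?B \<ge> 0" by (simp add: sum_nonneg)
    have C0: "?C \<ge> 0" using s2 by simp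
    have "?A + \<gamma> / 2 * (?B + ?C) = 0" using qz i qi by simp
    then have "?B + ?C = 0" using A0 B0 C0 pos
      by (smt (verit) mult_pos_pos half_gt_zero)
    then have Bz: "?B = 0" and Cz: "?C = 0" using B0 C0 by linarith+
    have ei: "e i = 0" using Cz s2 pos by simp
    have "\<forall>j\<in>{..<n}. (\<nu> * d i j + \<rho> * \<sigma> * e i / r)\<^sup>2 = 0"
      using Bz sum_nonneg_eq_0_iff[of "{..<n}" "\<lambda>j. (\<nu> * d i j + \<rho> * \<sigma> * e i / r)\<^sup>2"] by simp
    then have "\<forall>j<n. d i j = 0" using ei pos by simp
    then show ?thesis using ei by simp
  qed
  then show "(\<forall>i<n. e i = 0) \<and> (\<forall>i<n. \<forall>j<n. d i j = 0)" by blast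
qed



theorem mainTheorem2:
  fixes n :: nat and \<sigma> \<gamma>P c \<gamma> \<nu> \<rho> :: real
  assumes "n \<ge> 1" and "\<sigma> > 0" and "\<gamma>P > 0" and "c > 0" and "\<gamma> > 0" and "\<nu> > 0"
    and "-1 < \<rho>" and "\<rho> < 1"
  shows "h\<Delta> n \<gamma>P c \<gamma> \<nu> \<rho> > 0
    \<and> (\<exists>zQ zS. is_maximiser n \<sigma> \<gamma>P (\<lambda>_. c) (\<lambda>_. \<gamma>) (\<lambda>_. \<nu>) (\<lambda>_. \<rho>) zQ zS)
    \<and> (\<forall>zQ zS. is_maximiser n \<sigma> \<gamma>P (\<lambda>_. c) (\<lambda>_. \<gamma>) (\<lambda>_. \<nu>) (\<lambda>_. \<rho>) zQ zS \<longrightarrow>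
        (let A = hA c \<gamma> \<nu>; \<delta> = h\<delta> c \<gamma> \<nu>; \<alpha> = h\<alpha> n \<gamma>P \<gamma>; \<beta> = h\<beta> n \<sigma> \<rho>;
             \<kappa>t = h\<kappa>t n \<gamma>P c \<gamma> \<nu>; \<kappa> = h\<kappa> n \<gamma>P c \<gamma> \<nu>; \<Delta> = h\<Delta> n \<gamma>P c \<gamma> \<nu> \<rho>;
             zs = - (\<rho> * \<gamma>) / (A * c * \<sigma> * \<nu> * sqrt (real n) * \<Delta>) * (1 - \<gamma>P / (real n * \<kappa>t));
             K = 1 / \<kappa> * (\<gamma> * \<nu> / A - \<beta> * \<delta> * zs);
             zo = 1 / \<nu> * (\<alpha> * K - \<beta> * zs);
             zd = 1 / (\<nu> * A) * (\<gamma>P / real n * K - \<gamma> * \<beta> * zs + 1 / (c * \<nu>))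
         in (\<forall>i<n. zS i = zs) \<and> (\<forall>i<n. zQ i i = zd)
            \<and> (\<forall>i<n. \<forall>j<n. i \<noteq> j \<longrightarrow> zQ i j = zo)))"
proof -
  note as = assms
  define A where "A = hA c \<gamma> \<nu>"
  define \<delta> where "\<delta> = h\<delta> c \<gamma> \<nu>"
  define \<alpha> where "\<alpha> = h\<alpha> n \<gamma>P \<gamma>"
  define \<beta> where "\<beta> = h\<beta> n \<sigma> \<rho>"
  define \<kappa>t where "\<kappa>t = h\<kappa>t n \<gamma>P c \<gamma> \<nu>"
  define \<kappa> where "\<kappa> = h\<kappa> n \<gamma>P c \<gamma> \<nu>"
  define \<Delta> where "\<Delta> = h\<Delta> n \<gamma>P c \<gamma> \<nu> \<rho>"
  define zs where "zs = - (\<rho> * \<gamma>) / (A * c * \<sigma> * \<nu> * sqrt (real n) * \<Delta>) * (1 - \<gamma>P / (real n * \<kappa>t))"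
  define K where "K = 1 / \<kappa> * (\<gamma> * \<nu> / A - \<beta> * \<delta> * zs)"
  define zo where "zo = 1 / \<nu> * (\<alpha> * K - \<beta> * zs)"
  define zd where "zd = 1 / (\<nu> * A) * (\<gamma>P / real n * K - \<gamma> * \<beta> * zs + 1 / (c * \<nu>))"
  have rp: "sqrt (real n) > 0" using as(1) by simp
  have AL: "\<Delta> > 0 \<and> zd / c - 1 / c + \<gamma> * \<nu>\<^sup>2 * (zd - zo) = 0
    \<and> \<gamma> * \<nu>\<^sup>2 * zo + \<gamma> * \<sigma> * \<rho> * \<nu> * zs / sqrt (real n) = \<gamma>P * (\<nu> - \<nu> * (zd + (real n - 1) * zo) - \<rho> * \<sigma> / sqrt (real n) * (real n * zs)) * \<nu> / real n
    \<and> \<gamma> * \<sigma>\<^sup>2 * zs + \<gamma> * \<sigma> * \<rho> * \<nu> * (zd + (real n - 1) * zo) / sqrt (real n)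
       + \<gamma>P / 2 * (- 2 * (\<nu> - \<nu> * (zd + (real n - 1) * zo) - \<rho> * \<sigma> / sqrt (real n) * (real n * zs)) * \<rho> * \<sigma> / sqrt (real n)
            + 2 * (1 - \<rho>\<^sup>2) * \<sigma>\<^sup>2 * zs) = 0"
  proof (rule alg[OF rp _ as(2-8)])
    show "A = \<gamma> + 1 / (c * \<nu>\<^sup>2)" unfolding A_def hA_def ..
    show "\<delta> = 1 / (A * c * \<nu>\<^sup>2)" unfolding \<delta>_def A_def h\<delta>_def ..
    show "\<alpha> = \<gamma>P / (real n * \<gamma>)" unfolding \<alpha>_def h\<alpha>_def ..
    show "\<beta> = \<sigma> * \<rho> / sqrt (real n)" unfolding \<beta>_def h\<beta>_def ..
    show "\<kappa>t = A + \<gamma>P / real n * ((real n - 1) * A / \<gamma> + 1)" unfolding \<kappa>t_def A_def h\<kappa>t_def ..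
    show "\<kappa> = \<kappa>t / A" unfolding \<kappa>_def \<kappa>t_def A_def h\<kappa>_def ..
    show "\<Delta> = (\<gamma> + \<gamma>P) * (1 - \<rho>\<^sup>2) + \<gamma> * \<rho>\<^sup>2 * \<delta> / real n + \<gamma>P * \<rho>\<^sup>2 * \<delta>\<^sup>2 / ((real n)\<^sup>2 * \<kappa>)"
      unfolding \<Delta>_def \<delta>_def \<kappa>_def h\<Delta>_def ..
    show "zs = - (\<rho> * \<gamma>) / (A * c * \<sigma> * \<nu> * sqrt (real n) * \<Delta>) * (1 - \<gamma>P / (real n * \<kappa>t))" by (rule zs_def)
    show "K = 1 / \<kappa> * (\<gamma> * \<nu> / A - \<beta> * \<delta> * zs)" by (rule K_def)
    show "zo = 1 / \<nu> * (\<alpha> * K - \<beta> * zs)" by (rule zo_def)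
    show "zd = 1 / (\<nu> * A) * (\<gamma>P / real n * K - \<gamma> * \<beta> * zs + 1 / (c * \<nu>))" by (rule zd_def)
    show "real n = (sqrt (real n))\<^sup>2" by simp
    show "real n \<ge> 1" using as(1) by simp
  qed
  define w where "w = (\<lambda>i j::nat. if i = j then zd else zo)"
  let ?f = "objf n \<sigma> \<gamma>P (\<lambda>_. c) (\<lambda>_. \<gamma>) (\<lambda>_. \<nu>) (\<lambda>_. \<rho>)"
  have key: "?f zQ zS = ?f w (\<lambda>i. zs) - Qt n \<sigma> \<gamma>P c \<gamma> \<nu> \<rho> (\<lambda>i j. zQ i j - w i j) (\<lambda>i. zS i - zs)" for zQ zS
  proof -
    have e1: "(\<lambda>i j. (if i = j then zd else zo) + (zQ i j - w i j)) = zQ" unfolding w_def by auto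
    have e2: "(\<lambda>i. zs + (zS i - zs)) = zS" by auto
    have e3: "(\<lambda>i j. (if i = j then zd else zo)) = w" unfolding w_def ..
    have X: "?f (\<lambda>i j. (if i = j then zd else zo) + (zQ i j - w i j)) (\<lambda>i. zs + (zS i - zs))
      = ?f (\<lambda>i j. (if i = j then zd else zo)) (\<lambda>i. zs) - Qt n \<sigma> \<gamma>P c \<gamma> \<nu> \<rho> (\<lambda>i j. zQ i j - w i j) (\<lambda>i. zS i - zs)"
      by (rule expansion2[OF as(1) as(4) AL[THEN conjunct2, THEN conjunct1]
           AL[THEN conjunct2, THEN conjunct2, THEN conjunct1] AL[THEN conjunct2, THEN conjunct2, THEN conjunct2]])
    show ?thesis using X unfolding e1 e2 e3 .
  qed
  have Qpos: "Qt n \<sigma> \<gamma>P c \<gamma> \<nu> \<rho> d e \<ge> 0" for d e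
    using Qt_pos(1)[OF as(1) as(4) as(5) as(6) as(2) as(3) as(7) as(8)] .
  have Qz: "Qt n \<sigma> \<gamma>P c \<gamma> \<nu> \<rho> d e \<le> 0 \<Longrightarrow> (\<forall>i<n. e i = 0) \<and> (\<forall>i<n. \<forall>j<n. d i j = 0)" for d e
    using Qt_pos(2)[OF as(1) as(4) as(5) as(6) as(2) as(3) as(7) as(8)] .
  have ex: "is_maximiser n \<sigma> \<gamma>P (\<lambda>_. c) (\<lambda>_. \<gamma>) (\<lambda>_. \<nu>) (\<lambda>_. \<rho>) w (\<lambda>i. zs)"
    unfolding is_maximiser_def
  proof (intro allI)
    fix zQ' zS'
    show "?f zQ' zS' \<le> ?f w (\<lambda>i. zs)" using key[of zQ' zS'] Qpos[of "\<lambda>i j. zQ' i j - w i j" "\<lambda>i. zS' i - zs"] by linarith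
  qed
  have un: "(\<forall>i<n. zS i = zs) \<and> (\<forall>i<n. zQ i i = zd) \<and> (\<forall>i<n. \<forall>j<n. i \<noteq> j \<longrightarrow> zQ i j = zo)"
    if m: "is_maximiser n \<sigma> \<gamma>P (\<lambda>_. c) (\<lambda>_. \<gamma>) (\<lambda>_. \<nu>) (\<lambda>_. \<rho>) zQ zS" for zQ zS
  proof -
    have "?f w (\<lambda>i. zs) \<le> ?f zQ zS" using m unfolding is_maximiser_def by blast
    then have "Qt n \<sigma> \<gamma>P c \<gamma> \<nu> \<rho> (\<lambda>i j. zQ i j - w i j) (\<lambda>i. zS i - zs) \<le> 0"
      using key[of zQ zS] by linarith
    from Qz[OF this] show ?thesis unfolding w_def by auto
  qed
  show ?thesis
    unfolding Let_def
    unfolding A_def[symmetric] \<delta>_def[symmetric] \<alpha>_def[symmetric] \<beta>_def[symmetric] \<kappa>t_def[symmetric]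
      \<kappa>_def[symmetric] \<Delta>_def[symmetric]
    unfolding zs_def[symmetric]
    unfolding K_def[symmetric]
    unfolding zo_def[symmetric] zd_def[symmetric]
    apply (intro conjI)
      apply (rule AL[THEN conjunct1])
     apply (rule exI, rule exI, rule ex)
    apply (intro allI impI)
    apply (erule un)
    done
qed
end
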